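(* Let $\mathbf A$ be a super-paraorthomodular lattice and let $x,y\in\mathrm{Sh}(\mathbf A)$. Then the subalgebra $\mathbf{Sg}(x,y)$ of $\mathbf A$ generated by $x,y$ is distributive if and only if $x$ and $y$ commute in the orthomodular poset $\mathbf{Sh}(\mathbf A)$. In particular (in this case), $\mathbf{Sg}(x,y)$ is a Boolean subalgebra of $\mathbf A$.
   Context: A pseudo-Kleene lattice is an algebra $(A,\land,\lor,{}',0,1)$ that is a bounded lattice with an antitone involution ${}'$ ($x\leq y\Rightarrow y'\leq x'$, $x''=x$) satisfying $x\land x'\leq y\lor y'$. It is super-paraorthomodular if for all $x,y$: (SP1) $x\leq y$ and $x'\land y=(x\land x')\lor(y\land y')$ imply $y\land(x\lor x')=x\lor(y\land y')$; (SP2) $x\leq y$ implies $(x\land x')\lor(y\land y')=(x'\land y)\land(x'\land y)'$. $\mathrm{Sh}(\mathbf A)=\{a\in A:a\land a'=0\}$ and $\mathbf{Sh}(\mathbf A)=(\mathrm{Sh}(\mathbf A),\leq,{}',0,1)$ with inherited order and involution (it is an orthomodular poset). In $\mathbf{Sh}(\mathbf A)$, $x$ and $y$ commute if the meets $x\land y$ and $x\land y'$ exist in $\mathbf{Sh}(\mathbf A)$ and $x=(x\land y)\lor(x\land y')$ there. A Boolean subalgebra is a subalgebra which is a distributive lattice in which $u\land u'=0$ for every element $u$. *)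

theory Defs
  imports Main
begin

text \<open>An algebra (A, inf, sup, c, bot, top) is represented by a type 'a of class
bounded_lattice together with the unary operation c (the involution ').\<close>

definition pseudo_kleene :: "('a::bounded_lattice \<Rightarrow> 'a) \<Rightarrow> bool" where
  "pseudo_kleene c \<longleftrightarrow>
     (\<forall>x y. x \<le> y \<longrightarrow> c y \<le> c x) \<and>
     (\<forall>x. c (c x) = x) \<and>
     (\<forall>x y. inf x (c x) \<le> sup y (c y))"

definition super_paraorthomodular :: "('a::bounded_lattice \<Rightarrow> 'a) \<Rightarrow> bool" where
  "super_paraorthomodular c \<longleftrightarrow> pseudo_kleene c \<and>
     (\<forall>x y. x \<le> y \<and> inf (c x) y = sup (inf x (c x)) (inf y (c y))
        \<longrightarrow> inf y (sup x (c x)) = sup x (inf y (c y))) \<and>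
     (\<forall>x y. x \<le> y \<longrightarrow>
        sup (inf x (c x)) (inf y (c y)) = inf (inf (c x) y) (c (inf (c x) y)))"

definition Sh :: "('a::bounded_lattice \<Rightarrow> 'a) \<Rightarrow> 'a set" where
  "Sh c = {a. inf a (c a) = bot}"

definition is_meet_in :: "'a::order set \<Rightarrow> 'a \<Rightarrow> 'a \<Rightarrow> 'a \<Rightarrow> bool" where
  "is_meet_in S a b m \<longleftrightarrow> m \<in> S \<and> m \<le> a \<and> m \<le> b \<and>
     (\<forall>z\<in>S. z \<le> a \<and> z \<le> b \<longrightarrow> z \<le> m)"

definition is_join_in :: "'a::order set \<Rightarrow> 'a \<Rightarrow> 'a \<Rightarrow> 'a \<Rightarrow> bool" where
  "is_join_in S a b j \<longleftrightarrow> j \<in> S \<and> a \<le> j \<and> b \<le> j \<and>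
     (\<forall>z\<in>S. a \<le> z \<and> b \<le> z \<longrightarrow> j \<le> z)"

definition commute_Sh :: "('a::bounded_lattice \<Rightarrow> 'a) \<Rightarrow> 'a \<Rightarrow> 'a \<Rightarrow> bool" where
  "commute_Sh c x y \<longleftrightarrow> (\<exists>m1 m2. is_meet_in (Sh c) x y m1 \<and>
      is_meet_in (Sh c) x (c y) m2 \<and> is_join_in (Sh c) m1 m2 x)"

inductive_set Sg :: "('a::bounded_lattice \<Rightarrow> 'a) \<Rightarrow> 'a set \<Rightarrow> 'a set"
  for c :: "'a \<Rightarrow> 'a" and X :: "'a set" where
  gen: "a \<in> X \<Longrightarrow> a \<in> Sg c X"
| bot: "bot \<in> Sg c X"
| top: "top \<in> Sg c X"
| inf: "a \<in> Sg c X \<Longrightarrow> b \<in> Sg c X \<Longrightarrow> inf a b \<in> Sg c X"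
| sup: "a \<in> Sg c X \<Longrightarrow> b \<in> Sg c X \<Longrightarrow> sup a b \<in> Sg c X"
| cmp: "a \<in> Sg c X \<Longrightarrow> c a \<in> Sg c X"

definition subalgebra :: "('a::bounded_lattice \<Rightarrow> 'a) \<Rightarrow> 'a set \<Rightarrow> bool" where
  "subalgebra c S \<longleftrightarrow> bot \<in> S \<and> top \<in> S \<and>
     (\<forall>a\<in>S. \<forall>b\<in>S. inf a b \<in> S \<and> sup a b \<in> S) \<and> (\<forall>a\<in>S. c a \<in> S)"

definition distributive_on :: "'a::lattice set \<Rightarrow> bool" where
  "distributive_on S \<longleftrightarrow>
     (\<forall>a\<in>S. \<forall>b\<in>S. \<forall>d\<in>S. inf a (sup b d) = sup (inf a b) (inf a d))"

definition boolean_subalgebra :: "('a::bounded_lattice \<Rightarrow> 'a) \<Rightarrow> 'a set \<Rightarrow> bool" where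
  "boolean_subalgebra c S \<longleftrightarrow> subalgebra c S \<and> distributive_on S \<and>
     (\<forall>u\<in>S. inf u (c u) = bot)"

end

theory Submission
  imports Defs
begin

lemma pk_anti: "pseudo_kleene c \<Longrightarrow> x \<le> y \<Longrightarrow> c y \<le> c x"
  unfolding pseudo_kleene_def by blast

lemma pk_inv[simp]: "pseudo_kleene c \<Longrightarrow> c (c x) = x"
  unfolding pseudo_kleene_def by blast

lemma pk_le_iff: "pseudo_kleene c \<Longrightarrow> c x \<le> c y \<longleftrightarrow> y \<le> x"
  using pk_anti[of c "c x" "c y"] pk_anti[of c y x] by auto

lemma pk_le_c: "pseudo_kleene c \<Longrightarrow> x \<le> c y \<longleftrightarrow> y \<le> c x"
  using pk_anti[of c x "c y"] pk_anti[of c y "c x"] by auto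

lemma pk_c_sup: "pseudo_kleene c \<Longrightarrow> c (sup a b) = inf (c a) (c b)"
proof -
  assume pk: "pseudo_kleene c"
  have 1: "c (sup a b) \<le> inf (c a) (c b)" using pk_anti[OF pk] by simp
  have "sup a b \<le> c (inf (c a) (c b))"
    using pk_anti[OF pk, of "inf (c a) (c b)" "c a"] pk_anti[OF pk, of "inf (c a) (c b)" "c b"] pk
    by simp
  hence "c (c (inf (c a) (c b))) \<le> c (sup a b)" using pk_anti[OF pk] by blast
  thus ?thesis using 1 pk by (simp add: antisym)
qed

lemma pk_c_inf: "pseudo_kleene c \<Longrightarrow> c (inf a b) = sup (c a) (c b)"
  using pk_c_sup[of c "c a" "c b"] by (metis pk_inv)

lemma pk_c_bot[simp]: "pseudo_kleene c \<Longrightarrow> c bot = top"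
  using pk_le_c[of c top bot] by (simp add: top_unique)

lemma pk_c_top[simp]: "pseudo_kleene c \<Longrightarrow> c top = bot"
proof -
  assume pk: "pseudo_kleene c"
  have "c (c bot) = bot" by (rule pk_inv[OF pk])
  thus ?thesis by (simp only: pk_c_bot[OF pk])
qed

lemma Sh_iff: "u \<in> Sh c \<longleftrightarrow> inf u (c u) = bot" by (simp add: Sh_def)

lemma Sh_c: "pseudo_kleene c \<Longrightarrow> u \<in> Sh c \<Longrightarrow> c u \<in> Sh c"
  by (simp add: Sh_def inf_commute)

lemma Sh_sup_top: "pseudo_kleene c \<Longrightarrow> u \<in> Sh c \<Longrightarrow> sup u (c u) = top"
  using pk_c_inf[of c u "c u"] by (simp add: Sh_iff sup_commute)

lemma spo_pk: "super_paraorthomodular c \<Longrightarrow> pseudo_kleene c"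
  by (simp add: super_paraorthomodular_def)

lemma L1: assumes "super_paraorthomodular c" "u \<in> Sh c" "v \<in> Sh c" "u \<le> v"
  shows "inf v (c u) \<in> Sh c"
proof -
  have "sup (inf u (c u)) (inf v (c v)) = inf (inf (c u) v) (c (inf (c u) v))"
    using assms(1,4) unfolding super_paraorthomodular_def by blast
  thus ?thesis using assms(2,3) by (simp add: Sh_iff inf_commute)
qed

lemma L2: assumes "super_paraorthomodular c" "u \<in> Sh c" "v \<in> Sh c" "u \<le> c v"
  shows "sup u v \<in> Sh c"
proof -
  have pk: "pseudo_kleene c" using assms spo_pk by blast
  have "v \<le> c u" using assms(4) pk pk_le_c by blast
  hence "inf (c u) (c v) \<in> Sh c" using L1[OF assms(1) assms(3) Sh_c[OF pk assms(2)]] by blast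
  hence "c (inf (c u) (c v)) \<in> Sh c" using Sh_c pk by blast
  thus ?thesis using pk by (simp add: pk_c_inf)
qed

lemma L3: assumes "super_paraorthomodular c" "u \<in> Sh c" "v \<in> Sh c" "u \<le> v" "inf (c u) v = bot"
  shows "u = v"
proof -
  have "inf v (sup u (c u)) = sup u (inf v (c v))"
    using assms(1,4,5,2,3) unfolding super_paraorthomodular_def Sh_iff by auto
  thus ?thesis using assms Sh_sup_top[OF spo_pk[OF assms(1)] assms(2)] by (simp add: Sh_iff)
qed


definition J :: "'a::bounded_lattice \<Rightarrow> 'a \<Rightarrow> 'a \<Rightarrow> 'a \<Rightarrow> bool \<Rightarrow> bool \<Rightarrow> bool \<Rightarrow> bool \<Rightarrow> 'a" where
  "J a b r s p1 p2 p3 p4 = sup (if p1 then a else bot) (sup (if p2 then b else bot)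
     (sup (if p3 then r else bot) (if p4 then s else bot)))"

lemma ifsup: "sup (if p then (a::'a::bounded_lattice) else bot) (if q then a else bot) = (if p \<or> q then a else bot)"
  by auto

lemma sup4: "sup (sup (A1::'a::lattice) (sup A2 (sup A3 A4))) (sup B1 (sup B2 (sup B3 B4)))
   = sup (sup A1 B1) (sup (sup A2 B2) (sup (sup A3 B3) (sup A4 B4)))"
  by (simp add: sup_aci)

lemma J_sup: "sup (J a b r s p1 p2 p3 p4) (J a b r s q1 q2 q3 q4) = J a b r s (p1 \<or> q1) (p2 \<or> q2) (p3 \<or> q3) (p4 \<or> q4)"
  unfolding J_def sup4 ifsup ..

lemma dir1:
  assumes spo: "super_paraorthomodular c" and xS: "x \<in> Sh c" and yS: "y \<in> Sh c"
    and D: "distributive_on (Sg c {x, y})"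
  shows "commute_Sh c x y"
proof -
  have pk: "pseudo_kleene c" using spo spo_pk by blast
  let ?S = "Sg c {x, y}"
  have xs: "x \<in> ?S" and ys: "y \<in> ?S" by (auto intro: Sg.gen)
  have cxs: "c x \<in> ?S" and cys: "c y \<in> ?S" using xs ys by (auto intro: Sg.cmp)
  have x0: "inf x (c x) = bot" and y0: "inf y (c y) = bot" using xS yS by (auto simp: Sh_iff)
  have ixy: "inf x y \<in> ?S" by (rule Sg.inf[OF xs ys])
  have ixcy: "inf x (c y) \<in> ?S" by (rule Sg.inf[OF xs cys])
  have Dr: "\<And>a b d. a \<in> ?S \<Longrightarrow> b \<in> ?S \<Longrightarrow> d \<in> ?S \<Longrightarrow> inf a (sup b d) = sup (inf a b) (inf a d)"
    using D unfolding distributive_on_def by blast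
  have m1S: "inf x y \<in> Sh c"
  proof -
    have "inf (inf x y) (sup (c x) (c y)) = sup (inf (inf x y) (c x)) (inf (inf x y) (c y))"
      by (rule Dr[OF ixy cxs cys])
    also have "inf (inf x y) (c x) = inf y (inf x (c x))" by (simp add: inf_aci)
    also have "inf (inf x y) (c y) = inf x (inf y (c y))" by (simp add: inf_aci)
    finally show ?thesis using x0 y0 by (simp add: Sh_iff pk_c_inf[OF pk])
  qed
  have m2S: "inf x (c y) \<in> Sh c"
  proof -
    have "inf (inf x (c y)) (sup (c x) y) = sup (inf (inf x (c y)) (c x)) (inf (inf x (c y)) y)"
      by (rule Dr[OF ixcy cxs ys])
    also have "inf (inf x (c y)) (c x) = inf (c y) (inf x (c x))" by (simp add: inf_aci)
    also have "inf (inf x (c y)) y = inf x (inf y (c y))" by (simp add: inf_aci)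
    finally show ?thesis using x0 y0 pk by (simp add: Sh_iff pk_c_inf[OF pk])
  qed
  have xj: "x = sup (inf x y) (inf x (c y))"
  proof -
    have "inf x (sup y (c y)) = sup (inf x y) (inf x (c y))"
      by (rule Dr[OF xs ys cys])
    thus ?thesis using Sh_sup_top[OF pk yS] by simp
  qed
  have "is_meet_in (Sh c) x y (inf x y)" using m1S unfolding is_meet_in_def by simp
  moreover have "is_meet_in (Sh c) x (c y) (inf x (c y))" using m2S unfolding is_meet_in_def by simp
  moreover have "is_join_in (Sh c) (inf x y) (inf x (c y)) x" using xS xj unfolding is_join_in_def
    by (metis sup.cobounded1 sup.cobounded2 sup_least)
  ultimately show ?thesis unfolding commute_Sh_def by blast
qed


lemma dir2:
  assumes spo: "super_paraorthomodular c" and xS: "x \<in> Sh c" and yS: "y \<in> Sh c"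
    and C: "commute_Sh c x y"
  shows "distributive_on (Sg c {x, y}) \<and> boolean_subalgebra c (Sg c {x, y})"
proof -
  have pk: "pseudo_kleene c" using spo spo_pk by blast
  note le_c = pk_le_c[OF pk]
  note anti = pk_anti[OF pk]
  note csup = pk_c_sup[OF pk]
  note cinf = pk_c_inf[OF pk]
  obtain a b where ma: "is_meet_in (Sh c) x y a" and mb: "is_meet_in (Sh c) x (c y) b"
    and jn: "is_join_in (Sh c) a b x" using C unfolding commute_Sh_def by blast
  have aS: "a \<in> Sh c" and ax: "a \<le> x" and ay: "a \<le> y" using ma unfolding is_meet_in_def by auto
  have bS: "b \<in> Sh c" and bx: "b \<le> x" and bcy: "b \<le> c y" using mb unfolding is_meet_in_def by auto
  have jl: "\<And>z. z \<in> Sh c \<Longrightarrow> a \<le> z \<Longrightarrow> b \<le> z \<Longrightarrow> x \<le> z" using jn unfolding is_join_in_def by auto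
  have ycb: "y \<le> c b" using bcy le_c by blast
  have acb: "a \<le> c b" using ay ycb by (rule order_trans)
  have bca: "b \<le> c a" using acb le_c by blast
  have abS: "sup a b \<in> Sh c" by (rule L2[OF spo aS bS acb])
  have xab: "x = sup a b" using jl[OF abS] ax bx by (simp add: antisym)
  have cxab: "c x = inf (c a) (c b)" using xab csup by simp
  have x0: "inf x (c x) = bot" using xS by (simp add: Sh_iff)
  have y0: "inf y (c y) = bot" using yS by (simp add: Sh_iff)
  have cyS: "c y \<in> Sh c" using Sh_c[OF pk yS] .
  have cxS: "c x \<in> Sh c" using Sh_c[OF pk xS] .
  have xcb: "inf x (c b) = a"
  proof -
    have vS: "inf x (c b) \<in> Sh c" by (rule L1[OF spo bS xS bx])
    have "inf (c a) (inf x (c b)) = inf x (c x)" using cxab by (simp add: inf_aci)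
    hence "inf (c a) (inf x (c b)) = bot" using x0 by simp
    thus ?thesis using L3[OF spo aS vS] ax acb by simp
  qed
  have xca: "inf x (c a) = b"
  proof -
    have vS: "inf x (c a) \<in> Sh c" by (rule L1[OF spo aS xS ax])
    have "inf (c b) (inf x (c a)) = inf x (c x)" using cxab by (simp add: inf_aci)
    hence "inf (c b) (inf x (c a)) = bot" using x0 by simp
    thus ?thesis using L3[OF spo bS vS] bx bca by simp
  qed
  define r where "r = inf y (c a)"
  define s where "s = inf (c y) (c b)"
  have rS: "r \<in> Sh c" unfolding r_def by (rule L1[OF spo aS yS ay])
  have sS: "s \<in> Sh c" unfolding s_def by (rule L1[OF spo bS cyS bcy])
  have rca: "r \<le> c a" and ry: "r \<le> y" unfolding r_def by auto
  have scb: "s \<le> c b" and scy: "s \<le> c y" unfolding s_def by auto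
  have acr: "a \<le> c r" using rca le_c by blast
  have bcs: "b \<le> c s" using scb le_c by blast
  have cycr: "c y \<le> c r" using anti[OF ry] .
  have scr: "s \<le> c r" using scy cycr by (rule order_trans)
  have rcs: "r \<le> c s" using scr le_c by blast
  have rcb: "r \<le> c b" using ry ycb by (rule order_trans)
  have bcr: "b \<le> c r" using rcb le_c by blast
  have cyca: "c y \<le> c a" using anti[OF ay] .
  have sca: "s \<le> c a" using scy cyca by (rule order_trans)
  have acs: "a \<le> c s" using sca le_c by blast
  have yar: "y = sup a r"
  proof -
    have uS: "sup a r \<in> Sh c" by (rule L2[OF spo aS rS acr])
    have "inf (c (sup a r)) y = inf r (c r)" unfolding csup r_def by (simp add: inf_aci)
    hence "inf (c (sup a r)) y = bot" using rS by (simp add: Sh_iff)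
    thus ?thesis using L3[OF spo uS yS] ay ry by simp
  qed
  have cybs: "c y = sup b s"
  proof -
    have uS: "sup b s \<in> Sh c" by (rule L2[OF spo bS sS bcs])
    have "inf (c (sup b s)) (c y) = inf s (c s)" unfolding csup s_def by (simp add: inf_aci)
    hence "inf (c (sup b s)) (c y) = bot" using sS by (simp add: Sh_iff)
    thus ?thesis using L3[OF spo uS cyS] bcy scy by simp
  qed
  have yy: "sup y (c y) = top" by (rule Sh_sup_top[OF pk yS])
  have xx: "sup x (c x) = top" by (rule Sh_sup_top[OF pk xS])
  have cxrs: "c x = sup r s"
  proof -
    have uS: "sup r s \<in> Sh c" by (rule L2[OF spo rS sS rcs])
    have le: "sup r s \<le> c x" unfolding cxab using rca rcb sca scb by simp
    have "sup (sup r s) x = sup (sup a r) (sup b s)" unfolding xab by (simp add: sup_aci)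
    also have "\<dots> = sup y (c y)" by (simp only: yar[symmetric] cybs[symmetric])
    finally have "sup (sup r s) x = sup y (c y)" .
    hence "inf (c (sup r s)) (c x) = bot" using yy by (simp add: csup[symmetric] pk)
    thus ?thesis using L3[OF spo uS cxS le] by simp
  qed
  have "sup x (c x) = sup (sup a b) (sup r s)" by (subst cxrs, subst xab, rule refl)
  hence top4: "sup a (sup b (sup r s)) = top" using xx by (simp add: sup_aci)
  have axy: "a = inf x y"
  proof (rule antisym)
    show "a \<le> inf x y" using ax ay by simp
    have "inf x y \<le> inf x (c b)" using ycb by (simp add: le_infI2)
    thus "inf x y \<le> a" using xcb by simp
  qed
  have bxy: "b = inf x (c y)"
  proof (rule antisym)
    show "b \<le> inf x (c y)" using bx bcy by simp
    have "inf x (c y) \<le> inf x (c a)" using cyca by (simp add: le_infI2)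
    thus "inf x (c y) \<le> b" using xca by simp
  qed
  have rxy: "r = inf (c x) y"
  proof -
    have "inf (c x) y = inf r (c b)" unfolding cxab r_def by (simp add: inf_aci)
    thus ?thesis using rcb by (simp add: inf_absorb1)
  qed
  have sxy: "s = inf (c x) (c y)"
  proof -
    have "inf (c x) (c y) = inf s (c a)" unfolding cxab s_def by (simp add: inf_aci)
    thus ?thesis using sca by (simp add: inf_absorb1)
  qed
  have ca0: "c a = sup (c x) (c y)" using axy cinf by simp
  have ca: "c a = sup b (sup r s)" unfolding ca0 cxrs cybs by (simp add: sup_aci)
  have cb0: "c b = sup (c x) y" using bxy cinf pk by simp
  have cb: "c b = sup a (sup r s)" unfolding cb0 using cxrs yar by (simp add: sup_aci)
  have cr0: "c r = sup x (c y)" using rxy cinf pk by simp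
  have cr: "c r = sup a (sup b s)" unfolding cr0 using cybs xab by (simp add: sup_aci)
  have cs0: "c s = sup x y" using sxy cinf pk by simp
  have cs: "c s = sup a (sup b r)" unfolding cs0 using xab yar by (simp add: sup_aci)
  have cab: "c (sup a b) = sup r s" using xab cxrs by simp
  have car: "c (sup a r) = sup b s" using yar cybs by simp
  have cas: "c (sup a s) = sup b r"
  proof -
    have uS: "sup b r \<in> Sh c" by (rule L2[OF spo bS rS bcr])
    have vS: "c (sup a s) \<in> Sh c" by (rule Sh_c[OF pk L2[OF spo aS sS acs]])
    have le: "sup b r \<le> c (sup a s)" unfolding csup using bca bcs rca rcs by simp
    have "sup (sup b r) (sup a s) = top" using top4 by (simp add: sup_aci)
    hence "inf (c (sup b r)) (c (sup a s)) = bot" by (simp add: csup[symmetric] pk)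
    thus ?thesis using L3[OF spo uS vS le] by simp
  qed
  have inv: "\<And>u v. c u = v \<Longrightarrow> c v = u" using pk by auto
  have cbr: "c (sup b r) = sup a s" by (rule inv[OF cas])
  have cbs: "c (sup b s) = sup a r" by (rule inv[OF car])
  have crs: "c (sup r s) = sup a b" by (rule inv[OF cab])
  have ca': "c (sup b (sup r s)) = a" by (rule inv[OF ca])
  have cb': "c (sup a (sup r s)) = b" by (rule inv[OF cb])
  have cr': "c (sup a (sup b s)) = r" by (rule inv[OF cr])
  have cs': "c (sup a (sup b r)) = s" by (rule inv[OF cs])
  let ?J = "J a b r s"
  have Jc: "\<And>p1 p2 p3 p4. c (?J p1 p2 p3 p4) = ?J (\<not>p1) (\<not>p2) (\<not>p3) (\<not>p4)"
    subgoal for p1 p2 p3 p4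
      by (cases p1; cases p2; cases p3; cases p4)
        (simp_all add: J_def pk top4 ca cb cr cs cab car cas cbr cbs crs ca' cb' cr' cs')
    done
  have Ji: "\<And>p1 p2 p3 p4 q1 q2 q3 q4. inf (?J p1 p2 p3 p4) (?J q1 q2 q3 q4) = ?J (p1 \<and> q1) (p2 \<and> q2) (p3 \<and> q3) (p4 \<and> q4)"
  proof -
    fix p1 p2 p3 p4 q1 q2 q3 q4
    have "inf (?J p1 p2 p3 p4) (?J q1 q2 q3 q4) = inf (c (?J (\<not>p1) (\<not>p2) (\<not>p3) (\<not>p4))) (c (?J (\<not>q1) (\<not>q2) (\<not>q3) (\<not>q4)))"
      using Jc by simp
    also have "\<dots> = c (?J (\<not>p1 \<or> \<not>q1) (\<not>p2 \<or> \<not>q2) (\<not>p3 \<or> \<not>q3) (\<not>p4 \<or> \<not>q4))"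
      unfolding csup[symmetric] J_sup ..
    also have "\<dots> = ?J (p1 \<and> q1) (p2 \<and> q2) (p3 \<and> q3) (p4 \<and> q4)" unfolding Jc by simp
    finally show "inf (?J p1 p2 p3 p4) (?J q1 q2 q3 q4) = ?J (p1 \<and> q1) (p2 \<and> q2) (p3 \<and> q3) (p4 \<and> q4)" .
  qed
  define B where "B = {?J p1 p2 p3 p4 | p1 p2 p3 p4. True}"
  have Jb: "\<And>p1 p2 p3 p4. ?J p1 p2 p3 p4 \<in> B" unfolding B_def by blast
  have sub: "Sg c {x, y} \<subseteq> B"
  proof
    fix u assume "u \<in> Sg c {x, y}"
    thus "u \<in> B"
    proof (induction rule: Sg.induct)
      case (gen u)
      have "x = ?J True True False False" by (simp add: J_def xab)
      moreover have "y = ?J True False True False" by (simp add: J_def yar)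
      ultimately show ?case using gen Jb by auto
    next
      case bot
      have "bot = ?J False False False False" by (simp add: J_def)
      thus ?case using Jb by metis
    next
      case top
      have "top = ?J True True True True" by (simp add: J_def top4)
      thus ?case using Jb by metis
    next
      case (inf u v)
      then obtain p1 p2 p3 p4 q1 q2 q3 q4 where "u = ?J p1 p2 p3 p4" "v = ?J q1 q2 q3 q4"
        unfolding B_def by blast
      thus ?case using Ji Jb by simp
    next
      case (sup u v)
      then obtain p1 p2 p3 p4 q1 q2 q3 q4 where "u = ?J p1 p2 p3 p4" "v = ?J q1 q2 q3 q4"
        unfolding B_def by blast
      thus ?case using Jb by (simp add: J_sup)
    next
      case (cmp u)
      then obtain p1 p2 p3 p4 where "u = ?J p1 p2 p3 p4" unfolding B_def by blast
      thus ?case using Jc Jb by simp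
    qed
  qed
  have DB: "distributive_on B"
    unfolding distributive_on_def
  proof (intro ballI)
    fix u v w assume "u \<in> B" "v \<in> B" "w \<in> B"
    then obtain p1 p2 p3 p4 q1 q2 q3 q4 d1 d2 d3 d4 where
      "u = ?J p1 p2 p3 p4" "v = ?J q1 q2 q3 q4" "w = ?J d1 d2 d3 d4"
      unfolding B_def by blast
    thus "inf u (sup v w) = sup (inf u v) (inf u w)"
      by (simp only: Ji J_sup conj_disj_distribL)
  qed
  have SB: "\<forall>u\<in>B. inf u (c u) = bot"
  proof
    fix u assume "u \<in> B"
    then obtain p1 p2 p3 p4 where "u = ?J p1 p2 p3 p4" unfolding B_def by blast
    hence "inf u (c u) = ?J False False False False" by (simp only: Jc Ji simp_thms)
    thus "inf u (c u) = bot" by (simp add: J_def)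
  qed
  have DS: "distributive_on (Sg c {x, y})" using DB sub unfolding distributive_on_def by blast
  have subS: "subalgebra c (Sg c {x, y})"
    unfolding subalgebra_def by (simp add: Sg.bot Sg.top Sg.inf Sg.sup Sg.cmp)
  show ?thesis using DS subS SB sub unfolding boolean_subalgebra_def by blast
qed

theorem corollary4p6:
  fixes c :: "'a::bounded_lattice \<Rightarrow> 'a" and x y :: 'a
  assumes "super_paraorthomodular c"
    and "x \<in> Sh c" and "y \<in> Sh c"
  shows "(distributive_on (Sg c {x, y}) \<longleftrightarrow> commute_Sh c x y) \<and>
         (commute_Sh c x y \<longrightarrow> boolean_subalgebra c (Sg c {x, y}))"
  using dir1[OF assms] dir2[OF assms] by blast

end
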